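(* Let $(\mathcal{C},\mathbb{E},\mathfrak{s})$ be an extriangulated category with enough projective objects and enough injective objects, and let $(\mathcal{I},\mathcal{J})$ be an $\mathbb{E}$-cotorsion pair of ideals. Then $\mathcal{I}$ is a special precovering ideal if and only if $\mathcal{J}$ is a special preenveloping ideal.
   Context: An extriangulated category $(\mathcal{C},\mathbb{E},\mathfrak{s})$ (Nakaoka–Palu): additive $\mathcal{C}$, biadditive $\mathbb{E}:\mathcal{C}^{\mathrm{op}}\times\mathcal{C}\to\mathrm{Ab}$, additive realization $\mathfrak{s}$ assigning to each $\delta\in\mathbb{E}(C,A)$ an equivalence class of sequences $A\to B\to C$, forming $\mathbb{E}$-triangles $A\to B\to C\overset{\delta}{\dashrightarrow}$, satisfying (ET1)–(ET4), (ET3)$^{\mathrm{op}}$, (ET4)$^{\mathrm{op}}$. Notation $a_\star\delta=\mathbb{E}(C,a)(\delta)$, $c^\star\delta=\mathbb{E}(c,A)(\delta)$; a morphism of $\mathbb{E}$-triangles is a commuting triple $(a,b,c)$ with $a_\star\delta=c^\star\delta'$. An object $E$ is injective if $\mathbb{E}(C,E)=0$ for all $C$ (equivalently it has the extension property along $\mathbb{E}$-inflations); projective objects dually ($\mathbb{E}(P,A)=0$ for all $A$). Enough injective objects: every $A$ admits an $\mathbb{E}$-triangle $A\to E\to C\overset{\delta}{\dashrightarrow}$ with $E$ injective; enough projective objects: every $C$ admits an $\mathbb{E}$-triangle $K\to P\to C\overset{\delta}{\dashrightarrow}$ with $P$ projective. An ideal: class of morphisms with zeros, closed under sums and two-sided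 composition. $\mathcal{M}^{\perp_{\mathbb{E}}}=\{g:A\to Y\mid m^\star g_\star\delta=0\ \forall m\in\mathcal{M},\,m:X\to C,\ \forall\delta\in\mathbb{E}(C,A)\}$; ${}^{\perp_{\mathbb{E}}}\mathcal{M}=\{g:X\to C\mid g^\star m_\star\delta=0\ \forall m\in\mathcal{M},\,m:A\to Y,\ \forall\delta\in\mathbb{E}(C,A)\}$. An $\mathbb{E}$-cotorsion pair: $\mathcal{I}={}^{\perp_{\mathbb{E}}}\mathcal{J}$ and $\mathcal{J}=\mathcal{I}^{\perp_{\mathbb{E}}}$. Special $\mathcal{I}$-precover of $C$: $i:X\to C$ in $\mathcal{I}$ with $\mathbb{E}$-triangles $A\to B\to C\overset{\delta}{\dashrightarrow}$, $A'\to X\xrightarrow{i}C\overset{\delta'}{\dashrightarrow}$ and a morphism $(j,b,\mathrm{id}_C)$ between them, $j\in\mathcal{I}^{\perp_{\mathbb{E}}}$. Special $\mathcal{J}$-preenvelope of $A$: $e:A\to X$ in $\mathcal{J}$ with $\mathbb{E}$-triangles $A\xrightarrow{e}X\to Y\overset{\delta}{\dashrightarrow}$, $A\to B\to C\overset{\delta'}{\dashrightarrow}$ and a morphism $(\mathrm{id}_A,b,j)$ from the first to the second, $j\in{}^{\perp_{\mathbb{E}}}\mathcal{J}$. Special precovering/preenveloping ideal: every object has such a precover/preenvelope. *)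

theory Defs
  imports Main
begin

text \<open>
  Objects are the elements of type 'o, morphisms the elements of type 'm
  (each carrying its domain and codomain), extensions the elements of type 'e
  (each delta carrying the pair (C,A) with delta in E(C,A)).
  Composition: cmp g f = g o f (meaningful when Cod f = Dom g).
  push a delta = a_star delta,  pull c delta = c^star delta.
  realizes delta x y : the sequence A -x-> B -y-> C belongs to the
  equivalence class s(delta).
\<close>

record ('o,'m,'e) extri =
  Dom :: "'m \<Rightarrow> 'o"
  Cod :: "'m \<Rightarrow> 'o"
  cmp :: "'m \<Rightarrow> 'm \<Rightarrow> 'm"
  idm :: "'o \<Rightarrow> 'm"
  madd :: "'m \<Rightarrow> 'm \<Rightarrow> 'm"
  mzero :: "'o \<Rightarrow> 'o \<Rightarrow> 'm"
  mneg :: "'m \<Rightarrow> 'm"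
  Edom :: "'e \<Rightarrow> 'o"
  Ecod :: "'e \<Rightarrow> 'o"
  eadd :: "'e \<Rightarrow> 'e \<Rightarrow> 'e"
  ezero :: "'o \<Rightarrow> 'o \<Rightarrow> 'e"
  eneg :: "'e \<Rightarrow> 'e"
  push :: "'m \<Rightarrow> 'e \<Rightarrow> 'e"
  pull :: "'m \<Rightarrow> 'e \<Rightarrow> 'e"
  realizes :: "'e \<Rightarrow> 'm \<Rightarrow> 'm \<Rightarrow> bool"

definition hom :: "('o,'m,'e) extri \<Rightarrow> 'o \<Rightarrow> 'o \<Rightarrow> 'm \<Rightarrow> bool" where
  "hom X A B f \<longleftrightarrow> Dom X f = A \<and> Cod X f = B"

definition ext :: "('o,'m,'e) extri \<Rightarrow> 'o \<Rightarrow> 'o \<Rightarrow> 'e \<Rightarrow> bool" where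
  "ext X C A d \<longleftrightarrow> Edom X d = C \<and> Ecod X d = A"

definition par :: "('o,'m,'e) extri \<Rightarrow> 'm \<Rightarrow> 'm \<Rightarrow> bool" where
  "par X f g \<longleftrightarrow> Dom X f = Dom X g \<and> Cod X f = Cod X g"

definition is_iso :: "('o,'m,'e) extri \<Rightarrow> 'm \<Rightarrow> bool" where
  "is_iso X b \<longleftrightarrow> (\<exists>b'. hom X (Cod X b) (Dom X b) b' \<and>
      cmp X b' b = idm X (Dom X b) \<and> cmp X b b' = idm X (Cod X b))"

definition is_biprod :: "('o,'m,'e) extri \<Rightarrow> 'o \<Rightarrow> 'o \<Rightarrow> 'o \<Rightarrow> 'm \<Rightarrow> 'm \<Rightarrow> 'm \<Rightarrow> 'm \<Rightarrow> bool" where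
  "is_biprod X A B S i1 i2 p1 p2 \<longleftrightarrow>
     hom X A S i1 \<and> hom X B S i2 \<and> hom X S A p1 \<and> hom X S B p2 \<and>
     cmp X p1 i1 = idm X A \<and> cmp X p2 i2 = idm X B \<and>
     cmp X p2 i1 = mzero X A B \<and> cmp X p1 i2 = mzero X B A \<and>
     madd X (cmp X i1 p1) (cmp X i2 p2) = idm X S"

definition additive_cat :: "('o,'m,'e) extri \<Rightarrow> bool" where
  "additive_cat X \<longleftrightarrow>
     (\<forall>A. hom X A A (idm X A)) \<and>
     (\<forall>f g. Cod X f = Dom X g \<longrightarrow> hom X (Dom X f) (Cod X g) (cmp X g f)) \<and>
     (\<forall>f. cmp X (idm X (Cod X f)) f = f \<and> cmp X f (idm X (Dom X f)) = f) \<and>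
     (\<forall>f g h. Cod X f = Dom X g \<and> Cod X g = Dom X h \<longrightarrow>
        cmp X h (cmp X g f) = cmp X (cmp X h g) f) \<and>
     \<comment> \<open>each hom set is an abelian group\<close>
     (\<forall>A B. hom X A B (mzero X A B)) \<and>
     (\<forall>f g. par X f g \<longrightarrow> hom X (Dom X f) (Cod X f) (madd X f g)) \<and>
     (\<forall>f. hom X (Dom X f) (Cod X f) (mneg X f)) \<and>
     (\<forall>f g h. par X f g \<and> par X g h \<longrightarrow> madd X (madd X f g) h = madd X f (madd X g h)) \<and>
     (\<forall>f g. par X f g \<longrightarrow> madd X f g = madd X g f) \<and>
     (\<forall>f. madd X f (mzero X (Dom X f) (Cod X f)) = f) \<and>
     (\<forall>f. madd X f (mneg X f) = mzero X (Dom X f) (Cod X f)) \<and>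
     \<comment> \<open>composition is bilinear\<close>
     (\<forall>f g g'. Cod X f = Dom X g \<and> par X g g' \<longrightarrow>
        cmp X (madd X g g') f = madd X (cmp X g f) (cmp X g' f)) \<and>
     (\<forall>f f' g. Cod X f = Dom X g \<and> par X f f' \<longrightarrow>
        cmp X g (madd X f f') = madd X (cmp X g f) (cmp X g f')) \<and>
     \<comment> \<open>zero object\<close>
     (\<exists>Z. \<forall>A f. (hom X Z A f \<longrightarrow> f = mzero X Z A) \<and> (hom X A Z f \<longrightarrow> f = mzero X A Z)) \<and>
     \<comment> \<open>binary biproducts\<close>
     (\<forall>A B. \<exists>S i1 i2 p1 p2. is_biprod X A B S i1 i2 p1 p2)"

definition biadditive_E :: "('o,'m,'e) extri \<Rightarrow> bool" where
  "biadditive_E X \<longleftrightarrow>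
     \<comment> \<open>each E(C,A) is an abelian group\<close>
     (\<forall>C A. ext X C A (ezero X C A)) \<and>
     (\<forall>d d'. ext X (Edom X d) (Ecod X d) d' \<longrightarrow> ext X (Edom X d) (Ecod X d) (eadd X d d')) \<and>
     (\<forall>d. ext X (Edom X d) (Ecod X d) (eneg X d)) \<and>
     (\<forall>d d' d''. ext X (Edom X d) (Ecod X d) d' \<and> ext X (Edom X d) (Ecod X d) d'' \<longrightarrow>
        eadd X (eadd X d d') d'' = eadd X d (eadd X d' d'')) \<and>
     (\<forall>d d'. ext X (Edom X d) (Ecod X d) d' \<longrightarrow> eadd X d d' = eadd X d' d) \<and>
     (\<forall>d. eadd X d (ezero X (Edom X d) (Ecod X d)) = d) \<and>
     (\<forall>d. eadd X d (eneg X d) = ezero X (Edom X d) (Ecod X d)) \<and>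
     \<comment> \<open>typing of the actions\<close>
     (\<forall>a d. Dom X a = Ecod X d \<longrightarrow> ext X (Edom X d) (Cod X a) (push X a d)) \<and>
     (\<forall>c d. Cod X c = Edom X d \<longrightarrow> ext X (Dom X c) (Ecod X d) (pull X c d)) \<and>
     \<comment> \<open>the actions are group homomorphisms\<close>
     (\<forall>a d d'. Dom X a = Ecod X d \<and> ext X (Edom X d) (Ecod X d) d' \<longrightarrow>
        push X a (eadd X d d') = eadd X (push X a d) (push X a d')) \<and>
     (\<forall>c d d'. Cod X c = Edom X d \<and> ext X (Edom X d) (Ecod X d) d' \<longrightarrow>
        pull X c (eadd X d d') = eadd X (pull X c d) (pull X c d')) \<and>
     \<comment> \<open>functoriality\<close>
     (\<forall>d. push X (idm X (Ecod X d)) d = d) \<and>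
     (\<forall>d. pull X (idm X (Edom X d)) d = d) \<and>
     (\<forall>a b d. Dom X a = Ecod X d \<and> Cod X a = Dom X b \<longrightarrow>
        push X (cmp X b a) d = push X b (push X a d)) \<and>
     (\<forall>c c' d. Cod X c = Edom X d \<and> Cod X c' = Dom X c \<longrightarrow>
        pull X (cmp X c c') d = pull X c' (pull X c d)) \<and>
     \<comment> \<open>bifunctoriality\<close>
     (\<forall>a c d. Dom X a = Ecod X d \<and> Cod X c = Edom X d \<longrightarrow>
        push X a (pull X c d) = pull X c (push X a d)) \<and>
     \<comment> \<open>additivity in each variable\<close>
     (\<forall>a a' d. Dom X a = Ecod X d \<and> par X a a' \<longrightarrow>
        push X (madd X a a') d = eadd X (push X a d) (push X a' d)) \<and>
     (\<forall>c c' d. Cod X c = Edom X d \<and> par X c c' \<longrightarrow>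
        pull X (madd X c c') d = eadd X (pull X c d) (pull X c' d))"

definition seq_equiv :: "('o,'m,'e) extri \<Rightarrow> 'm \<Rightarrow> 'm \<Rightarrow> 'm \<Rightarrow> 'm \<Rightarrow> bool" where
  "seq_equiv X x y x' y' \<longleftrightarrow>
     Cod X x = Dom X y \<and> Cod X x' = Dom X y' \<and>
     Dom X x = Dom X x' \<and> Cod X y = Cod X y' \<and>
     (\<exists>b. hom X (Cod X x) (Cod X x') b \<and> is_iso X b \<and>
          cmp X b x = x' \<and> cmp X y' b = y)"

definition additive_realization :: "('o,'m,'e) extri \<Rightarrow> bool" where
  "additive_realization X \<longleftrightarrow>
     \<comment> \<open>s(delta) is an equivalence class of sequences A -> B -> C\<close>
     (\<forall>d. \<exists>x y. realizes X d x y) \<and>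
     (\<forall>d x y. realizes X d x y \<longrightarrow>
        Dom X x = Ecod X d \<and> Cod X x = Dom X y \<and> Cod X y = Edom X d) \<and>
     (\<forall>d x y x' y'. realizes X d x y \<and> realizes X d x' y' \<longrightarrow> seq_equiv X x y x' y') \<and>
     (\<forall>d x y x' y'. realizes X d x y \<and> seq_equiv X x y x' y' \<longrightarrow> realizes X d x' y') \<and>
     \<comment> \<open>realization condition\<close>
     (\<forall>d d' x y x' y' a c.
        realizes X d x y \<and> realizes X d' x' y' \<and>
        hom X (Ecod X d) (Ecod X d') a \<and> hom X (Edom X d) (Edom X d') c \<and>
        push X a d = pull X c d' \<longrightarrow>
        (\<exists>b. hom X (Cod X x) (Cod X x') b \<and> cmp X b x = cmp X x' a \<and> cmp X y' b = cmp X c y)) \<and>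
     \<comment> \<open>additivity: s(0) is the split sequence\<close>
     (\<forall>C A S i1 i2 p1 p2. is_biprod X A C S i1 i2 p1 p2 \<longrightarrow> realizes X (ezero X C A) i1 p2) \<and>
     \<comment> \<open>additivity: s(delta (+) delta') = s(delta) (+) s(delta')\<close>
     (\<forall>d d' x y x' y' SA ia1 ia2 pa1 pa2 SB ib1 ib2 pb1 pb2 SC ic1 ic2 pc1 pc2.
        realizes X d x y \<and> realizes X d' x' y' \<and>
        is_biprod X (Ecod X d) (Ecod X d') SA ia1 ia2 pa1 pa2 \<and>
        is_biprod X (Cod X x) (Cod X x') SB ib1 ib2 pb1 pb2 \<and>
        is_biprod X (Edom X d) (Edom X d') SC ic1 ic2 pc1 pc2 \<longrightarrow>
        realizes X (eadd X (push X ia1 (pull X pc1 d)) (push X ia2 (pull X pc2 d')))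
          (madd X (cmp X ib1 (cmp X x pa1)) (cmp X ib2 (cmp X x' pa2)))
          (madd X (cmp X ic1 (cmp X y pb1)) (cmp X ic2 (cmp X y' pb2))))"

definition ET3 :: "('o,'m,'e) extri \<Rightarrow> bool" where
  "ET3 X \<longleftrightarrow>
     (\<forall>d d' x y x' y' a b.
        realizes X d x y \<and> realizes X d' x' y' \<and>
        hom X (Ecod X d) (Ecod X d') a \<and> hom X (Cod X x) (Cod X x') b \<and>
        cmp X b x = cmp X x' a \<longrightarrow>
        (\<exists>c. hom X (Edom X d) (Edom X d') c \<and> cmp X c y = cmp X y' b \<and>
             push X a d = pull X c d'))"

definition ET3op :: "('o,'m,'e) extri \<Rightarrow> bool" where
  "ET3op X \<longleftrightarrow>
     (\<forall>d d' x y x' y' b c.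
        realizes X d x y \<and> realizes X d' x' y' \<and>
        hom X (Cod X x) (Cod X x') b \<and> hom X (Edom X d) (Edom X d') c \<and>
        cmp X c y = cmp X y' b \<longrightarrow>
        (\<exists>a. hom X (Ecod X d) (Ecod X d') a \<and> cmp X b x = cmp X x' a \<and>
             push X a d = pull X c d'))"

text \<open>(ET4): for E-triangles A -f-> B -f'-> D (d) and B -g-> C -g'-> F (d').\<close>
definition ET4 :: "('o,'m,'e) extri \<Rightarrow> bool" where
  "ET4 X \<longleftrightarrow>
     (\<forall>d f f' d' g g'.
        realizes X d f f' \<and> realizes X d' g g' \<and> Cod X f = Dom X g \<longrightarrow>
        (\<exists>h' dd e d''.
           realizes X d'' (cmp X g f) h' \<and>
           realizes X (push X f' d') dd e \<and>
           cmp X dd f' = cmp X h' g \<and>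
           cmp X e h' = g' \<and>
           pull X dd d'' = d \<and>
           push X f d'' = pull X e d'))"

text \<open>(ET4)^op: for E-triangles D -p-> B -q-> A (d) and F -r-> C -s-> B (d').\<close>
definition ET4op :: "('o,'m,'e) extri \<Rightarrow> bool" where
  "ET4op X \<longleftrightarrow>
     (\<forall>d p q d' r s.
        realizes X d p q \<and> realizes X d' r s \<and> Cod X s = Dom X q \<longrightarrow>
        (\<exists>h' dd e d''.
           realizes X d'' h' (cmp X q s) \<and>
           realizes X (pull X p d') e dd \<and>
           cmp X s h' = cmp X p dd \<and>
           cmp X h' e = r \<and>
           push X dd d'' = d \<and>
           pull X q d'' = push X e d'))"

definition extriangulated :: "('o,'m,'e) extri \<Rightarrow> bool" where
  "extriangulated X \<longleftrightarrow> additive_cat X \<and> biadditive_E X \<and> additive_realization X \<and>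
     ET3 X \<and> ET3op X \<and> ET4 X \<and> ET4op X"

definition injective_obj :: "('o,'m,'e) extri \<Rightarrow> 'o \<Rightarrow> bool" where
  "injective_obj X E \<longleftrightarrow> (\<forall>d. Ecod X d = E \<longrightarrow> d = ezero X (Edom X d) E)"

definition projective_obj :: "('o,'m,'e) extri \<Rightarrow> 'o \<Rightarrow> bool" where
  "projective_obj X P \<longleftrightarrow> (\<forall>d. Edom X d = P \<longrightarrow> d = ezero X P (Ecod X d))"

definition enough_injectives :: "('o,'m,'e) extri \<Rightarrow> bool" where
  "enough_injectives X \<longleftrightarrow>
     (\<forall>A. \<exists>d x y. realizes X d x y \<and> Ecod X d = A \<and> injective_obj X (Cod X x))"

definition enough_projectives :: "('o,'m,'e) extri \<Rightarrow> bool" where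
  "enough_projectives X \<longleftrightarrow>
     (\<forall>C. \<exists>d x y. realizes X d x y \<and> Edom X d = C \<and> projective_obj X (Cod X x))"

definition ideal :: "('o,'m,'e) extri \<Rightarrow> 'm set \<Rightarrow> bool" where
  "ideal X M \<longleftrightarrow>
     (\<forall>A B. mzero X A B \<in> M) \<and>
     (\<forall>f g. f \<in> M \<and> g \<in> M \<and> par X f g \<longrightarrow> madd X f g \<in> M) \<and>
     (\<forall>f g. f \<in> M \<and> Cod X f = Dom X g \<longrightarrow> cmp X g f \<in> M) \<and>
     (\<forall>f g. g \<in> M \<and> Cod X f = Dom X g \<longrightarrow> cmp X g f \<in> M)"

definition rperp :: "('o,'m,'e) extri \<Rightarrow> 'm set \<Rightarrow> 'm set" where
  "rperp X M = {g. \<forall>m\<in>M. \<forall>d. ext X (Cod X m) (Dom X g) d \<longrightarrow>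
       pull X m (push X g d) = ezero X (Dom X m) (Cod X g)}"

definition lperp :: "('o,'m,'e) extri \<Rightarrow> 'm set \<Rightarrow> 'm set" where
  "lperp X M = {g. \<forall>m\<in>M. \<forall>d. ext X (Cod X g) (Dom X m) d \<longrightarrow>
       pull X g (push X m d) = ezero X (Dom X g) (Cod X m)}"

definition cotorsion_pair :: "('o,'m,'e) extri \<Rightarrow> 'm set \<Rightarrow> 'm set \<Rightarrow> bool" where
  "cotorsion_pair X I J \<longleftrightarrow> ideal X I \<and> ideal X J \<and> I = lperp X J \<and> J = rperp X I"

definition special_precover :: "('o,'m,'e) extri \<Rightarrow> 'm set \<Rightarrow> 'm \<Rightarrow> 'o \<Rightarrow> bool" where
  "special_precover X I i C \<longleftrightarrow> i \<in> I \<and> Cod X i = C \<and>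
     (\<exists>d x y d' x' j b.
        realizes X d x y \<and> Edom X d = C \<and> realizes X d' x' i \<and>
        hom X (Ecod X d) (Ecod X d') j \<and> hom X (Cod X x) (Dom X i) b \<and>
        cmp X b x = cmp X x' j \<and> cmp X i b = cmp X (idm X C) y \<and>
        push X j d = pull X (idm X C) d' \<and>
        j \<in> rperp X I)"

definition special_preenvelope :: "('o,'m,'e) extri \<Rightarrow> 'm set \<Rightarrow> 'm \<Rightarrow> 'o \<Rightarrow> bool" where
  "special_preenvelope X J e A \<longleftrightarrow> e \<in> J \<and> Dom X e = A \<and>
     (\<exists>d y d' x w b j.
        realizes X d e y \<and> realizes X d' x w \<and> Ecod X d' = A \<and>
        hom X (Cod X e) (Cod X x) b \<and> hom X (Edom X d) (Edom X d') j \<and>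
        cmp X b e = cmp X x (idm X A) \<and> cmp X w b = cmp X j y \<and>
        push X (idm X A) d = pull X j d' \<and>
        j \<in> lperp X J)"

definition special_precovering :: "('o,'m,'e) extri \<Rightarrow> 'm set \<Rightarrow> bool" where
  "special_precovering X I \<longleftrightarrow> (\<forall>C. \<exists>i. special_precover X I i C)"

definition special_preenveloping :: "('o,'m,'e) extri \<Rightarrow> 'm set \<Rightarrow> bool" where
  "special_preenveloping X J \<longleftrightarrow> (\<forall>A. \<exists>e. special_preenvelope X J e A)"

end

theory Submission
  imports Defs
begin

context
  fixes X :: "('o,'m,'e) extri"
  assumes ex: "extriangulated X"
begin

lemma AC: "additive_cat X" using ex unfolding extriangulated_def by blast
lemma BE: "biadditive_E X" using ex unfolding extriangulated_def by blast
lemma AR: "additive_realization X" using ex unfolding extriangulated_def by blast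

lemma hom_cmp: "Cod X f = Dom X g \<Longrightarrow> Dom X (cmp X g f) = Dom X f \<and> Cod X (cmp X g f) = Cod X g"
  using AC[unfolded additive_cat_def, THEN conjunct2, THEN conjunct1] unfolding hom_def by blast
lemma hom_idm: "Dom X (idm X A) = A \<and> Cod X (idm X A) = A"
  using AC[unfolded additive_cat_def, THEN conjunct1] unfolding hom_def by blast
lemma idl: "cmp X (idm X (Cod X f)) f = f" using AC[unfolded additive_cat_def, THEN conjunct2, THEN conjunct2, THEN conjunct1] by blast
lemma idr: "cmp X f (idm X (Dom X f)) = f" using AC[unfolded additive_cat_def, THEN conjunct2, THEN conjunct2, THEN conjunct1] by blast
lemma assoc: "Cod X f = Dom X g \<Longrightarrow> Cod X g = Dom X h \<Longrightarrow>
        cmp X h (cmp X g f) = cmp X (cmp X h g) f" using AC[unfolded additive_cat_def, THEN conjunct2, THEN conjunct2, THEN conjunct2, THEN conjunct1] by blast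
lemma biprod_ex: "\<exists>S i1 i2 p1 p2. is_biprod X A B S i1 i2 p1 p2"
  using AC[unfolded additive_cat_def, THEN conjunct2, THEN conjunct2, THEN conjunct2, THEN conjunct2, THEN conjunct2, THEN conjunct2, THEN conjunct2, THEN conjunct2, THEN conjunct2, THEN conjunct2, THEN conjunct2, THEN conjunct2, THEN conjunct2, THEN conjunct2] by blast

lemma ezero_ty: "Edom X (ezero X C A) = C \<and> Ecod X (ezero X C A) = A"
  using BE[unfolded biadditive_E_def, THEN conjunct1] unfolding ext_def by blast
lemma eneg_ext: "ext X (Edom X d) (Ecod X d) (eneg X d)" using BE[unfolded biadditive_E_def, THEN conjunct2, THEN conjunct2, THEN conjunct1] by blast
lemma eassoc: "ext X (Edom X d) (Ecod X d) d' \<Longrightarrow> ext X (Edom X d) (Ecod X d) d'' \<Longrightarrow>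
        eadd X (eadd X d d') d'' = eadd X d (eadd X d' d'')" using BE[unfolded biadditive_E_def, THEN conjunct2, THEN conjunct2, THEN conjunct2, THEN conjunct1] by blast
lemma eadd0: "eadd X d (ezero X (Edom X d) (Ecod X d)) = d" using BE[unfolded biadditive_E_def, THEN conjunct2, THEN conjunct2, THEN conjunct2, THEN conjunct2, THEN conjunct2, THEN conjunct1] by blast
lemma eaddneg: "eadd X d (eneg X d) = ezero X (Edom X d) (Ecod X d)" using BE[unfolded biadditive_E_def, THEN conjunct2, THEN conjunct2, THEN conjunct2, THEN conjunct2, THEN conjunct2, THEN conjunct2, THEN conjunct1] by blast
lemma push_ty: "Dom X a = Ecod X d \<Longrightarrow> Edom X (push X a d) = Edom X d \<and> Ecod X (push X a d) = Cod X a"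
  using BE[unfolded biadditive_E_def, THEN conjunct2, THEN conjunct2, THEN conjunct2, THEN conjunct2, THEN conjunct2, THEN conjunct2, THEN conjunct2, THEN conjunct1] unfolding ext_def by blast
lemma pull_ty: "Cod X c = Edom X d \<Longrightarrow> Edom X (pull X c d) = Dom X c \<and> Ecod X (pull X c d) = Ecod X d"
  using BE[unfolded biadditive_E_def, THEN conjunct2, THEN conjunct2, THEN conjunct2, THEN conjunct2, THEN conjunct2, THEN conjunct2, THEN conjunct2, THEN conjunct2, THEN conjunct1] unfolding ext_def by blast
lemma push_hom: "Dom X a = Ecod X d \<Longrightarrow> ext X (Edom X d) (Ecod X d) d' \<Longrightarrow>
        push X a (eadd X d d') = eadd X (push X a d) (push X a d')" using BE[unfolded biadditive_E_def, THEN conjunct2, THEN conjunct2, THEN conjunct2, THEN conjunct2, THEN conjunct2, THEN conjunct2, THEN conjunct2, THEN conjunct2, THEN conjunct2, THEN conjunct1] by blast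
lemma pull_hom: "Cod X c = Edom X d \<Longrightarrow> ext X (Edom X d) (Ecod X d) d' \<Longrightarrow>
        pull X c (eadd X d d') = eadd X (pull X c d) (pull X c d')" using BE[unfolded biadditive_E_def, THEN conjunct2, THEN conjunct2, THEN conjunct2, THEN conjunct2, THEN conjunct2, THEN conjunct2, THEN conjunct2, THEN conjunct2, THEN conjunct2, THEN conjunct2, THEN conjunct1] by blast
lemma push_id: "push X (idm X (Ecod X d)) d = d" using BE[unfolded biadditive_E_def, THEN conjunct2, THEN conjunct2, THEN conjunct2, THEN conjunct2, THEN conjunct2, THEN conjunct2, THEN conjunct2, THEN conjunct2, THEN conjunct2, THEN conjunct2, THEN conjunct2, THEN conjunct1] by blast
lemma pull_id: "pull X (idm X (Edom X d)) d = d" using BE[unfolded biadditive_E_def, THEN conjunct2, THEN conjunct2, THEN conjunct2, THEN conjunct2, THEN conjunct2, THEN conjunct2, THEN conjunct2, THEN conjunct2, THEN conjunct2, THEN conjunct2, THEN conjunct2, THEN conjunct2, THEN conjunct1] by blast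
lemma push_cmp: "Dom X a = Ecod X d \<Longrightarrow> Cod X a = Dom X b \<Longrightarrow>
        push X (cmp X b a) d = push X b (push X a d)" using BE[unfolded biadditive_E_def, THEN conjunct2, THEN conjunct2, THEN conjunct2, THEN conjunct2, THEN conjunct2, THEN conjunct2, THEN conjunct2, THEN conjunct2, THEN conjunct2, THEN conjunct2, THEN conjunct2, THEN conjunct2, THEN conjunct2, THEN conjunct1] by blast
lemma pull_cmp: "Cod X c = Edom X d \<Longrightarrow> Cod X c' = Dom X c \<Longrightarrow>
        pull X (cmp X c c') d = pull X c' (pull X c d)" using BE[unfolded biadditive_E_def, THEN conjunct2, THEN conjunct2, THEN conjunct2, THEN conjunct2, THEN conjunct2, THEN conjunct2, THEN conjunct2, THEN conjunct2, THEN conjunct2, THEN conjunct2, THEN conjunct2, THEN conjunct2, THEN conjunct2, THEN conjunct2, THEN conjunct1] by blast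
lemma bif: "Dom X a = Ecod X d \<Longrightarrow> Cod X c = Edom X d \<Longrightarrow>
        push X a (pull X c d) = pull X c (push X a d)" using BE[unfolded biadditive_E_def, THEN conjunct2, THEN conjunct2, THEN conjunct2, THEN conjunct2, THEN conjunct2, THEN conjunct2, THEN conjunct2, THEN conjunct2, THEN conjunct2, THEN conjunct2, THEN conjunct2, THEN conjunct2, THEN conjunct2, THEN conjunct2, THEN conjunct2, THEN conjunct1] by blast

lemma cancel:
  assumes "eadd X u u = u" shows "u = ezero X (Edom X u) (Ecod X u)"
proof -
  have e1: "ext X (Edom X u) (Ecod X u) u" by (simp add: ext_def)
  have e2: "ext X (Edom X u) (Ecod X u) (eneg X u)" by (rule eneg_ext)
  have "ezero X (Edom X u) (Ecod X u) = eadd X u (eneg X u)" by (simp add: eaddneg)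
  also have "\<dots> = eadd X (eadd X u u) (eneg X u)" using assms by simp
  also have "\<dots> = eadd X u (eadd X u (eneg X u))" using eassoc[OF e1 e2] .
  also have "\<dots> = eadd X u (ezero X (Edom X u) (Ecod X u))" by (simp add: eaddneg)
  also have "\<dots> = u" by (rule eadd0)
  finally show ?thesis by simp
qed

lemma zz: "eadd X (ezero X C A) (ezero X C A) = ezero X C A"
  using eadd0[of "ezero X C A"] ezero_ty by simp

lemma push_zero: assumes "Dom X a = A" shows "push X a (ezero X C A) = ezero X C (Cod X a)"
proof -
  let ?z = "ezero X C A"
  have e: "ext X (Edom X ?z) (Ecod X ?z) ?z" by (simp add: ext_def)
  have "push X a ?z = push X a (eadd X ?z ?z)" using zz by simp
  also have "\<dots> = eadd X (push X a ?z) (push X a ?z)"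
    using push_hom[OF _ e] assms ezero_ty by simp
  finally have "push X a ?z = ezero X (Edom X (push X a ?z)) (Ecod X (push X a ?z))"
    using cancel by metis
  thus ?thesis using push_ty[of a ?z] assms ezero_ty by simp
qed

lemma pull_zero: assumes "Cod X c = C" shows "pull X c (ezero X C A) = ezero X (Dom X c) A"
proof -
  let ?z = "ezero X C A"
  have e: "ext X (Edom X ?z) (Ecod X ?z) ?z" by (simp add: ext_def)
  have "pull X c ?z = pull X c (eadd X ?z ?z)" using zz by simp
  also have "\<dots> = eadd X (pull X c ?z) (pull X c ?z)"
    using pull_hom[OF _ e] assms ezero_ty by simp
  finally have "pull X c ?z = ezero X (Edom X (pull X c ?z)) (Ecod X (pull X c ?z))"
    using cancel by metis
  thus ?thesis using pull_ty[of c ?z] assms ezero_ty by simp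
qed

lemma real_ty: "realizes X d x y \<Longrightarrow> Dom X x = Ecod X d \<and> Cod X x = Dom X y \<and> Cod X y = Edom X d"
  using AR[unfolded additive_realization_def, THEN conjunct2, THEN conjunct1] by blast
lemma real_ex: "\<exists>x y. realizes X d x y"
  using AR[unfolded additive_realization_def, THEN conjunct1] by blast
lemma split_real: "is_biprod X A C S i1 i2 p1 p2 \<Longrightarrow> realizes X (ezero X C A) i1 p2"
  using AR[unfolded additive_realization_def, THEN conjunct2, THEN conjunct2, THEN conjunct2, THEN conjunct2, THEN conjunct2, THEN conjunct1] by blast
lemma real_cond: "realizes X d x y \<Longrightarrow> realizes X d' x' y' \<Longrightarrow>
        hom X (Ecod X d) (Ecod X d') a \<Longrightarrow> hom X (Edom X d) (Edom X d') c \<Longrightarrow>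
        push X a d = pull X c d' \<Longrightarrow>
        (\<exists>b. hom X (Cod X x) (Cod X x') b \<and> cmp X b x = cmp X x' a \<and> cmp X y' b = cmp X c y)"
  using AR[unfolded additive_realization_def, THEN conjunct2, THEN conjunct2, THEN conjunct2, THEN conjunct2, THEN conjunct1] by blast

lemma L3a: assumes "realizes X d x y" shows "pull X y d = ezero X (Dom X y) (Ecod X d)"
proof -
  obtain S i1 i2 p1 p2 where bp: "is_biprod X (Ecod X d) (Dom X y) S i1 i2 p1 p2" using biprod_ex by blast
  have r0: "realizes X (ezero X (Dom X y) (Ecod X d)) i1 p2" using split_real[OF bp] .
  have et: "ET3op X" using ex unfolding extriangulated_def by blast
  have "hom X (Cod X i1) (Cod X x) p2" using bp real_ty[OF assms] unfolding is_biprod_def hom_def by auto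
  moreover have "hom X (Edom X (ezero X (Dom X y) (Ecod X d))) (Edom X d) y"
    using real_ty[OF assms] ezero_ty unfolding hom_def by auto
  ultimately obtain a where a: "hom X (Ecod X (ezero X (Dom X y) (Ecod X d))) (Ecod X d) a"
     "push X a (ezero X (Dom X y) (Ecod X d)) = pull X y d"
    using et r0 assms unfolding ET3op_def by blast
  thus ?thesis using push_zero[of a "Ecod X d" "Dom X y"] ezero_ty unfolding hom_def by auto
qed

lemma L3b: assumes "realizes X d x y" shows "push X x d = ezero X (Edom X d) (Cod X x)"
proof -
  obtain S i1 i2 p1 p2 where bp: "is_biprod X (Cod X x) (Edom X d) S i1 i2 p1 p2" using biprod_ex by blast
  have r0: "realizes X (ezero X (Edom X d) (Cod X x)) i1 p2" using split_real[OF bp] .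
  have et: "ET3 X" using ex unfolding extriangulated_def by blast
  have "hom X (Ecod X d) (Ecod X (ezero X (Edom X d) (Cod X x))) x"
    using real_ty[OF assms] ezero_ty unfolding hom_def by auto
  moreover have "hom X (Cod X x) (Cod X i1) i1" using bp unfolding is_biprod_def hom_def by auto
  ultimately obtain c where c: "hom X (Edom X d) (Edom X (ezero X (Edom X d) (Cod X x))) c"
     "push X x d = pull X c (ezero X (Edom X d) (Cod X x))"
    using et r0 assms unfolding ET3_def by blast
  thus ?thesis using pull_zero[of c "Edom X d" "Cod X x"] ezero_ty unfolding hom_def by auto
qed


lemma L1:
  assumes r: "realizes X d x y" and fd: "Dom X f = Ecod X d"
    and z: "push X f d = ezero X (Edom X d) (Cod X f)"
  shows "\<exists>g. Dom X g = Cod X x \<and> Cod X g = Cod X f \<and> f = cmp X g x"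
proof -
  obtain S i1 i2 p1 p2 where bp: "is_biprod X (Cod X f) (Edom X d) S i1 i2 p1 p2" using biprod_ex by blast
  have r0: "realizes X (ezero X (Edom X d) (Cod X f)) i1 p2" using split_real[OF bp] .
  have h1: "hom X (Ecod X d) (Ecod X (ezero X (Edom X d) (Cod X f))) f"
    using fd ezero_ty unfolding hom_def by simp
  have h2: "hom X (Edom X d) (Edom X (ezero X (Edom X d) (Cod X f))) (idm X (Edom X d))"
    using hom_idm ezero_ty unfolding hom_def by simp
  have eq: "push X f d = pull X (idm X (Edom X d)) (ezero X (Edom X d) (Cod X f))"
    using z pull_id[of "ezero X (Edom X d) (Cod X f)"] ezero_ty by simp
  obtain b where b: "hom X (Cod X x) (Cod X i1) b" "cmp X b x = cmp X i1 f"
    using real_cond[OF r r0 h1 h2 eq] by blast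
  have bi: "Dom X i1 = Cod X f" "Cod X i1 = S" "Dom X p1 = S" "Cod X p1 = Cod X f"
    "cmp X p1 i1 = idm X (Cod X f)" using bp unfolding is_biprod_def hom_def by auto
  have rt: "Cod X x = Dom X y" "Dom X x = Ecod X d" using real_ty[OF r] by auto
  have "cmp X (cmp X p1 b) x = cmp X p1 (cmp X b x)"
    using assoc[of x b p1] b(1) bi unfolding hom_def by simp
  also have "\<dots> = cmp X p1 (cmp X i1 f)" using b(2) by simp
  also have "\<dots> = cmp X (cmp X p1 i1) f" using assoc[of f i1 p1] bi by simp
  also have "\<dots> = f" using bi idl by simp
  finally show ?thesis using b(1) bi hom_cmp[of b p1] unfolding hom_def by (intro exI[of _ "cmp X p1 b"]) auto
qed

lemma L1':
  assumes r: "realizes X d x y" and hd: "Cod X h = Edom X d"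
    and z: "pull X h d = ezero X (Dom X h) (Ecod X d)"
  shows "\<exists>g. Dom X g = Dom X h \<and> Cod X g = Dom X y \<and> h = cmp X y g"
proof -
  obtain S i1 i2 p1 p2 where bp: "is_biprod X (Ecod X d) (Dom X h) S i1 i2 p1 p2" using biprod_ex by blast
  have r0: "realizes X (ezero X (Dom X h) (Ecod X d)) i1 p2" using split_real[OF bp] .
  have h1: "hom X (Ecod X (ezero X (Dom X h) (Ecod X d))) (Ecod X d) (idm X (Ecod X d))"
    using hom_idm ezero_ty unfolding hom_def by simp
  have h2: "hom X (Edom X (ezero X (Dom X h) (Ecod X d))) (Edom X d) h"
    using hd ezero_ty unfolding hom_def by simp
  have eq: "push X (idm X (Ecod X d)) (ezero X (Dom X h) (Ecod X d)) = pull X h d"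
    using z push_id[of "ezero X (Dom X h) (Ecod X d)"] ezero_ty by simp
  obtain b where b: "hom X (Cod X i1) (Cod X x) b" "cmp X y b = cmp X h p2"
    using real_cond[OF r0 r h1 h2 eq] by blast
  have bi: "Dom X i2 = Dom X h" "Cod X i2 = S" "Dom X p2 = S" "Cod X p2 = Dom X h" "Cod X i1 = S"
    "cmp X p2 i2 = idm X (Dom X h)" using bp unfolding is_biprod_def hom_def by auto
  have rt: "Cod X x = Dom X y" using real_ty[OF r] by auto
  have "cmp X y (cmp X b i2) = cmp X (cmp X y b) i2"
    using assoc[of i2 b y] b(1) bi rt unfolding hom_def by simp
  also have "\<dots> = cmp X (cmp X h p2) i2" using b(2) by simp
  also have "\<dots> = cmp X h (cmp X p2 i2)" using assoc[of i2 p2 h] bi by simp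
  also have "\<dots> = h" using bi idr by simp
  finally show ?thesis using b(1) bi rt hom_cmp[of i2 b] unfolding hom_def by (intro exI[of _ "cmp X b i2"]) auto
qed

lemma L2:
  assumes r: "realizes X d x y" and p: "projective_obj X (Cod X x)"
    and t: "Edom X th = Edom X d"
  shows "\<exists>g. Dom X g = Ecod X d \<and> Cod X g = Ecod X th \<and> th = push X g d"
proof -
  obtain x0 y0 where r0: "realizes X th x0 y0" using real_ex by blast
  have rt: "Dom X x = Ecod X d" "Cod X x = Dom X y" "Cod X y = Edom X d" using real_ty[OF r] by auto
  have rt0: "Dom X x0 = Ecod X th" "Cod X x0 = Dom X y0" "Cod X y0 = Edom X th" using real_ty[OF r0] by auto
  have "pull X y th = ezero X (Dom X y) (Ecod X th)"
    using p pull_ty[of y th] rt t unfolding projective_obj_def by metis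
  then obtain g' where g': "Dom X g' = Dom X y" "Cod X g' = Dom X y0" "y = cmp X y0 g'"
    using L1'[OF r0, of y] rt t by auto
  have et: "ET3op X" using ex unfolding extriangulated_def by blast
  have hb: "hom X (Cod X x) (Cod X x0) g'" using g' rt rt0 unfolding hom_def by simp
  have hc: "hom X (Edom X d) (Edom X th) (idm X (Edom X d))" using hom_idm t unfolding hom_def by simp
  have ceq: "cmp X (idm X (Edom X d)) y = cmp X y0 g'" using g'(3) idl[of y] rt by simp
  obtain a where a: "hom X (Ecod X d) (Ecod X th) a" "push X a d = pull X (idm X (Edom X d)) th"
    using et r r0 hb hc ceq unfolding ET3op_def by blast
  thus ?thesis using pull_id[of th] t unfolding hom_def by auto
qed

lemma L2':
  assumes r: "realizes X d x y" and inj: "injective_obj X (Cod X x)"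
    and t: "Ecod X th = Ecod X d"
  shows "\<exists>g. Dom X g = Edom X th \<and> Cod X g = Edom X d \<and> th = pull X g d"
proof -
  obtain x0 y0 where r0: "realizes X th x0 y0" using real_ex by blast
  have rt: "Dom X x = Ecod X d" "Cod X x = Dom X y" "Cod X y = Edom X d" using real_ty[OF r] by auto
  have rt0: "Dom X x0 = Ecod X th" "Cod X x0 = Dom X y0" "Cod X y0 = Edom X th" using real_ty[OF r0] by auto
  have "push X x th = ezero X (Edom X th) (Cod X x)"
    using inj push_ty[of x th] rt t unfolding injective_obj_def by metis
  then obtain g' where g': "Dom X g' = Cod X x0" "Cod X g' = Cod X x" "x = cmp X g' x0"
    using L1[OF r0, of x] rt t by auto
  have et: "ET3 X" using ex unfolding extriangulated_def by blast
  have ha: "hom X (Ecod X th) (Ecod X d) (idm X (Ecod X d))" using hom_idm t unfolding hom_def by simp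
  have hb: "hom X (Cod X x0) (Cod X x) g'" using g' unfolding hom_def by simp
  have beq: "cmp X g' x0 = cmp X x (idm X (Ecod X d))" using g'(3) idr[of x] rt by simp
  obtain c where c: "hom X (Edom X th) (Edom X d) c" "push X (idm X (Ecod X d)) th = pull X c d"
    using et r0 r ha hb beq unfolding ET3_def by blast
  thus ?thesis using push_id[of th] t unfolding hom_def by auto
qed

lemma dirA:
  assumes ep: "enough_projectives X" and cp: "cotorsion_pair X I J"
    and sp: "special_preenveloping X J"
  shows "special_precovering X I"
  unfolding special_precovering_def
proof
  fix C
  have idJ: "ideal X J" and IJ: "I = lperp X J" and JI: "J = rperp X I"
    using cp unfolding cotorsion_pair_def by blast+
  obtain dl x y where r: "realizes X dl x y" and dC: "Edom X dl = C" and pr: "projective_obj X (Cod X x)"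
    using ep unfolding enough_projectives_def by blast
  have rt: "Dom X x = Ecod X dl" "Cod X x = Dom X y" "Cod X y = Edom X dl" using real_ty[OF r] by auto
  obtain e d0 y0 d' x1 w b0 j where e: "e \<in> J" "Dom X e = Ecod X dl"
    and r0: "realizes X d0 e y0" and r': "realizes X d' x1 w" and d'K: "Ecod X d' = Ecod X dl"
    and hj: "hom X (Edom X d0) (Edom X d') j"
    and eq0: "push X (idm X (Ecod X dl)) d0 = pull X j d'" and jJ: "j \<in> lperp X J"
    using sp unfolding special_preenveloping_def special_preenvelope_def by blast
  have rt0: "Dom X e = Ecod X d0" "Cod X e = Dom X y0" "Cod X y0 = Edom X d0" using real_ty[OF r0] by auto
  have d0eq: "d0 = pull X j d'" using eq0 push_id[of d0] rt0 e by simp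
  define dd where "dd = push X e dl"
  have ddt: "Edom X dd = C" "Ecod X dd = Cod X e" using push_ty[of e dl] e dC unfolding dd_def by auto
  obtain x' i where ri: "realizes X dd x' i" using real_ex by blast
  have rti: "Dom X x' = Ecod X dd" "Cod X x' = Dom X i" "Cod X i = Edom X dd" using real_ty[OF ri] by auto
  have h1: "hom X (Ecod X dl) (Ecod X dd) e" using e ddt unfolding hom_def by simp
  have h2: "hom X (Edom X dl) (Edom X dd) (idm X C)" using hom_idm dC ddt unfolding hom_def by simp
  have eqd: "push X e dl = pull X (idm X C) dd" using pull_id[of dd] ddt dd_def by simp
  obtain b where b: "hom X (Cod X x) (Cod X x') b" "cmp X b x = cmp X x' e" "cmp X i b = cmp X (idm X C) y"
    using real_cond[OF r ri h1 h2 eqd] by blast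
  have iI: "i \<in> I"
    unfolding IJ lperp_def
  proof (intro CollectI ballI allI impI)
    fix m th assume mJ: "m \<in> J" and th: "ext X (Cod X i) (Dom X m) th"
    obtain g where g: "Dom X g = Ecod X dl" "Cod X g = Dom X m" "th = push X g dl"
      using L2[OF r pr, of th] th rti ddt dC unfolding ext_def by auto
    have mgJ: "cmp X m g \<in> J"
    proof -
      have "\<forall>f g. g \<in> J \<and> Cod X f = Dom X g \<longrightarrow> cmp X g f \<in> J" using idJ unfolding ideal_def by blast
      thus ?thesis using mJ g(2) by simp
    qed
    have mgt: "Dom X (cmp X m g) = Ecod X dl" "Cod X (cmp X m g) = Cod X m" using hom_cmp[of g m] g by auto
    have hjt: "Dom X j = Edom X d0" "Cod X j = Edom X d'" using hj unfolding hom_def by auto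
    have "push X (cmp X m g) d0 = pull X j (push X (cmp X m g) d')"
      using d0eq bif[of "cmp X m g" d' j] mgt d'K hjt by simp
    also have "\<dots> = ezero X (Dom X j) (Cod X (cmp X m g))"
      using jJ mgJ hjt mgt d'K unfolding lperp_def ext_def by auto
    finally have z: "push X (cmp X m g) d0 = ezero X (Edom X d0) (Cod X (cmp X m g))" using hjt by simp
    obtain f where f: "Dom X f = Cod X e" "Cod X f = Cod X m" "cmp X m g = cmp X f e"
      using L1[OF r0, of "cmp X m g"] z mgt rt0 e by auto
    have "push X m th = push X (cmp X m g) dl" using push_cmp[of g dl m] g by simp
    also have "\<dots> = push X f dd" using f push_cmp[of e dl f] e unfolding dd_def by simp
    finally have pm: "push X m th = push X f dd" .
    have "pull X i (push X m th) = push X f (pull X i dd)"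
      using pm bif[of f dd i] f ddt rti by simp
    also have "\<dots> = push X f (ezero X (Dom X i) (Ecod X dd))" using L3a[OF ri] by simp
    also have "\<dots> = ezero X (Dom X i) (Cod X m)" using push_zero[of f] f ddt by simp
    finally show "pull X i (push X m th) = ezero X (Dom X i) (Cod X m)" .
  qed
  have eR: "e \<in> rperp X I" using e(1) JI by simp
  have H: "realizes X dl x y \<and> Edom X dl = C \<and> realizes X dd x' i \<and>
      hom X (Ecod X dl) (Ecod X dd) e \<and> hom X (Cod X x) (Dom X i) b \<and>
      cmp X b x = cmp X x' e \<and> cmp X i b = cmp X (idm X C) y \<and>
      push X e dl = pull X (idm X C) dd \<and> e \<in> rperp X I"
    using r dC ri h1 b(2,3) eqd eR b(1) rti(2) unfolding hom_def by simp
  have Ci: "Cod X i = C" using rti ddt by simp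
  show "\<exists>i. special_precover X I i C"
    unfolding special_precover_def using iI Ci H by blast
qed

lemma dirB:
  assumes ei: "enough_injectives X" and cp: "cotorsion_pair X I J"
    and sc: "special_precovering X I"
  shows "special_preenveloping X J"
  unfolding special_preenveloping_def
proof
  fix A
  have idI: "ideal X I" and IJ: "I = lperp X J" and JI: "J = rperp X I"
    using cp unfolding cotorsion_pair_def by blast+
  obtain dl x y where r: "realizes X dl x y" and dA: "Ecod X dl = A" and inj: "injective_obj X (Cod X x)"
    using ei unfolding enough_injectives_def by blast
  have rt: "Dom X x = Ecod X dl" "Cod X x = Dom X y" "Cod X y = Edom X dl" using real_ty[OF r] by auto
  obtain i d x0 y0 d' x' j b0 where iI: "i \<in> I" and iC: "Cod X i = Edom X dl"
    and r0: "realizes X d x0 y0" and dC: "Edom X d = Edom X dl" and r': "realizes X d' x' i"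
    and hj: "hom X (Ecod X d) (Ecod X d') j"
    and eq0: "push X j d = pull X (idm X (Edom X dl)) d'" and jJ: "j \<in> rperp X I"
    using sc unfolding special_precovering_def special_precover_def by blast
  have rt': "Dom X x' = Ecod X d'" "Cod X x' = Dom X i" "Cod X i = Edom X d'" using real_ty[OF r'] by auto
  have d'eq: "d' = push X j d" using eq0 pull_id[of d'] rt' iC by simp
  define dd where "dd = pull X i dl"
  have ddt: "Edom X dd = Dom X i" "Ecod X dd = A" using pull_ty[of i dl] iC dA unfolding dd_def by auto
  obtain e w where re: "realizes X dd e w" using real_ex by blast
  have rte: "Dom X e = Ecod X dd" "Cod X e = Dom X w" "Cod X w = Edom X dd" using real_ty[OF re] by auto
  have h1: "hom X (Ecod X dd) (Ecod X dl) (idm X A)" using hom_idm dA ddt unfolding hom_def by simp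
  have h2: "hom X (Edom X dd) (Edom X dl) i" using ddt iC unfolding hom_def by simp
  have eqd: "push X (idm X A) dd = pull X i dl" using push_id[of dd] ddt dd_def by simp
  obtain b where b: "hom X (Cod X e) (Cod X x) b" "cmp X b e = cmp X x (idm X A)" "cmp X y b = cmp X i w"
    using real_cond[OF re r h1 h2 eqd] by blast
  have eJ: "e \<in> J"
    unfolding JI rperp_def
  proof (intro CollectI ballI allI impI)
    fix m th assume mI: "m \<in> I" and th: "ext X (Cod X m) (Dom X e) th"
    obtain g where g: "Dom X g = Cod X m" "Cod X g = Edom X dl" "th = pull X g dl"
      using L2'[OF r inj, of th] th rte ddt dA unfolding ext_def by auto
    have gmI: "cmp X g m \<in> I"
    proof -
      have "\<forall>f g. f \<in> I \<and> Cod X f = Dom X g \<longrightarrow> cmp X g f \<in> I" using idI unfolding ideal_def by blast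
      thus ?thesis using mI g(1) by simp
    qed
    have gmt: "Dom X (cmp X g m) = Dom X m" "Cod X (cmp X g m) = Edom X dl" using hom_cmp[of m g] g by auto
    have hjt: "Dom X j = Ecod X d" "Cod X j = Ecod X d'" using hj unfolding hom_def by auto
    have ed: "ext X (Cod X (cmp X g m)) (Dom X j) d" using gmt dC hjt unfolding ext_def by simp
    have "pull X (cmp X g m) (push X j d) = ezero X (Dom X (cmp X g m)) (Cod X j)"
      using jJ gmI ed unfolding rperp_def by blast
    hence z: "pull X (cmp X g m) d' = ezero X (Dom X (cmp X g m)) (Ecod X d')"
      unfolding d'eq[symmetric] hjt(2) .
    have hd: "Cod X (cmp X g m) = Edom X d'" using gmt(2) iC rt'(3) by metis
    obtain f where f: "Dom X f = Dom X (cmp X g m)" "Cod X f = Dom X i" "cmp X g m = cmp X i f"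
      using L1'[OF r' hd z] by blast
    have fm: "Dom X f = Dom X m" using f(1) gmt(1) by simp
    have "pull X m th = pull X (cmp X g m) dl" using pull_cmp[of g dl m] g by simp
    also have "\<dots> = pull X f dd" using f pull_cmp[of i dl f] iC unfolding dd_def by simp
    finally have pm: "pull X m th = pull X f dd" .
    have "pull X m (push X e th) = push X e (pull X m th)"
      using bif[of e th m] th unfolding ext_def by simp
    also have "\<dots> = pull X f (push X e dd)" using pm bif[of e dd f] rte f ddt by simp
    also have "\<dots> = pull X f (ezero X (Edom X dd) (Cod X e))" using L3b[OF re] by simp
    also have "\<dots> = ezero X (Dom X m) (Cod X e)" using pull_zero[of f] f(2) fm ddt by simp
    finally show "pull X m (push X e th) = ezero X (Dom X m) (Cod X e)" .
  qed
  have iL: "i \<in> lperp X J" using iI IJ by simp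
  have H: "realizes X dd e w \<and> realizes X dl x y \<and> Ecod X dl = A \<and>
      hom X (Cod X e) (Cod X x) b \<and> hom X (Edom X dd) (Edom X dl) i \<and>
      cmp X b e = cmp X x (idm X A) \<and> cmp X y b = cmp X i w \<and>
      push X (idm X A) dd = pull X i dl \<and> i \<in> lperp X J"
    using re r dA b h2 eqd iL by simp
  have De: "Dom X e = A" using rte ddt by simp
  show "\<exists>e. special_preenvelope X J e A"
    unfolding special_preenvelope_def using eJ De H by blast
qed
end

theorem mainTheorem12:
  fixes X :: "('o,'m,'e) extri" and I J :: "'m set"
  assumes "extriangulated X"
    and "enough_projectives X"
    and "enough_injectives X"
    and "cotorsion_pair X I J"
  shows "special_precovering X I \<longleftrightarrow> special_preenveloping X J"
  using dirA[OF assms(1) assms(2) assms(4)] dirB[OF assms(1) assms(3) assms(4)] by blast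

end
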